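(* Let $n\ge 1$ and let $G$ be a bipartite multigraph consisting of $n$ matchings $M_1,\dots,M_n$ (not necessarily edge-disjoint), each with at least $2n$ edges. Then $G$ contains a rainbow matching with $n$ edges.
   Context: Each matching $M_i$ is a colour class (colour $i$); if the same pair of vertices is an edge of several $M_i$, these are treated as distinct parallel edges of different colours. A matching is rainbow if it contains at most one edge of each colour. *)

theory Defs
  imports Main
begin

definition is_matching :: "('a \<times> 'b) set \<Rightarrow> bool" where
  "is_matching M \<longleftrightarrow>
     (\<forall>e\<in>M. \<forall>e'\<in>M. e \<noteq> e' \<longrightarrow> fst e \<noteq> fst e' \<and> snd e \<noteq> snd e')"

text \<open>A coloured edge is a pair (i, e) with colour i and e in the colour class M i
(parallel edges of different colours are thus distinct).\<close>

definition is_rainbow_matching ::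
  "(nat \<Rightarrow> ('a \<times> 'b) set) \<Rightarrow> nat set \<Rightarrow> (nat \<times> ('a \<times> 'b)) set \<Rightarrow> bool" where
  "is_rainbow_matching M I R \<longleftrightarrow>
     (\<forall>(i, e)\<in>R. i \<in> I \<and> e \<in> M i) \<and>
     (\<forall>c\<in>R. \<forall>c'\<in>R. c \<noteq> c' \<longrightarrow>
        fst c \<noteq> fst c' \<and> fst (snd c) \<noteq> fst (snd c') \<and> snd (snd c) \<noteq> snd (snd c'))"

end

theory Submission
  imports Defs
begin

lemma match_fst_bound:
  assumes "is_matching M" "finite A"
  shows "finite {e\<in>M. fst e \<in> A} \<and> card {e\<in>M. fst e \<in> A} \<le> card A"
proof -
  have inj: "inj_on fst {e \<in> M. fst e \<in> A}" using assms(1) unfolding is_matching_def inj_on_def by blast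
  have sub: "fst ` {e \<in> M. fst e \<in> A} \<subseteq> A" by auto
  have "finite {e \<in> M. fst e \<in> A}" using finite_imageD[OF finite_subset[OF sub assms(2)] inj] .
  moreover have "card {e\<in>M. fst e \<in> A} \<le> card A" using card_inj_on_le[OF inj sub assms(2)] .
  ultimately show ?thesis by simp
qed

lemma match_snd_bound:
  assumes "is_matching M" "finite A"
  shows "finite {e\<in>M. snd e \<in> A} \<and> card {e\<in>M. snd e \<in> A} \<le> card A"
proof -
  have inj: "inj_on snd {e \<in> M. snd e \<in> A}" using assms(1) unfolding is_matching_def inj_on_def by blast
  have sub: "snd ` {e \<in> M. snd e \<in> A} \<subseteq> A" by auto
  have "finite {e \<in> M. snd e \<in> A}" using finite_imageD[OF finite_subset[OF sub assms(2)] inj] .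
  moreover have "card {e\<in>M. snd e \<in> A} \<le> card A" using card_inj_on_le[OF inj sub assms(2)] .
  ultimately show ?thesis by simp
qed

lemma greedy:
  fixes n :: nat and M :: "nat \<Rightarrow> ('a \<times> 'b) set"
  assumes "\<And>i. i \<in> {1..n} \<Longrightarrow> is_matching (M i)"
    and "\<And>i. i \<in> {1..n} \<Longrightarrow> infinite (M i) \<or> card (M i) \<ge> 2 * n"
  shows "k \<le> n \<Longrightarrow> \<exists>R. is_rainbow_matching M {1..k} R \<and> finite R \<and> card R = k"
proof (induction k)
  case 0
  show ?case by (rule exI[of _ "{}"]) (simp add: is_rainbow_matching_def)
next
  case (Suc k)
  then obtain R where R: "is_rainbow_matching M {1..k} R" "finite R" "card R = k" by auto
  define i where "i = Suc k"
  have i: "i \<in> {1..n}" using Suc.prems i_def by auto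
  define A where "A = fst ` snd ` R"
  define C where "C = snd ` snd ` R"
  have fA: "finite A" "card A \<le> k" unfolding A_def using R
    by (auto intro: order_trans[OF card_image_le] simp: image_image)
  have fC: "finite C" "card C \<le> k" unfolding C_def using R
    by (auto intro: order_trans[OF card_image_le] simp: image_image)
  define B where "B = {e\<in>M i. fst e \<in> A} \<union> {e\<in>M i. snd e \<in> C}"
  note b1 = match_fst_bound[OF assms(1)[OF i] fA(1)]
  note b2 = match_snd_bound[OF assms(1)[OF i] fC(1)]
  have fB: "finite B" unfolding B_def using b1 b2 by simp
  have cB: "card B \<le> 2 * k" unfolding B_def
    using card_Un_le[of "{e\<in>M i. fst e \<in> A}" "{e\<in>M i. snd e \<in> C}"] b1 b2 fA fC by linarith
  have "\<not> M i \<subseteq> B"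
  proof
    assume s: "M i \<subseteq> B"
    then have "finite (M i)" using fB finite_subset by blast
    then have "card (M i) \<ge> 2 * n" using assms(2)[OF i] by blast
    moreover have "card (M i) \<le> card B" using card_mono[OF fB s] .
    ultimately show False using cB Suc.prems by linarith
  qed
  then obtain e where e: "e \<in> M i" "e \<notin> B" by blast
  have eA: "fst e \<notin> A" and eC: "snd e \<notin> C" using e unfolding B_def by auto
  have Rcol: "\<forall>c\<in>R. fst c \<in> {1..k} \<and> snd c \<in> M (fst c)"
    using R(1) unfolding is_rainbow_matching_def by auto
  have notin: "(i, e) \<notin> R" using Rcol i_def by auto
  define R' where "R' = insert (i, e) R"
  have "is_rainbow_matching M {1..Suc k} R'"
    unfolding is_rainbow_matching_def R'_def
  proof (intro conjI)
    show "\<forall>(j, f)\<in>insert (i, e) R. j \<in> {1..Suc k} \<and> f \<in> M j"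
      using Rcol e i_def by auto
  next
    show "\<forall>c\<in>insert (i, e) R. \<forall>c'\<in>insert (i, e) R. c \<noteq> c' \<longrightarrow>
        fst c \<noteq> fst c' \<and> fst (snd c) \<noteq> fst (snd c') \<and> snd (snd c) \<noteq> snd (snd c')"
    proof (intro ballI impI)
    fix c c' assume c: "c \<in> insert (i, e) R" "c' \<in> insert (i, e) R" "c \<noteq> c'"
    have new: "fst d \<noteq> i \<and> fst (snd d) \<noteq> fst e \<and> snd (snd d) \<noteq> snd e" if "d \<in> R" for d
    proof -
      have "fst (snd d) \<in> A" unfolding A_def using that by (intro imageI)
      moreover have "snd (snd d) \<in> C" unfolding C_def using that by (intro imageI)
      moreover have "fst d \<le> k" using Rcol that by auto
      ultimately show ?thesis using eA eC i_def by auto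
    qed
    have old: "fst c \<noteq> fst c' \<and> fst (snd c) \<noteq> fst (snd c') \<and> snd (snd c) \<noteq> snd (snd c')"
      if "c \<in> R" "c' \<in> R" using R(1) that c(3) unfolding is_rainbow_matching_def by blast
    show "fst c \<noteq> fst c' \<and> fst (snd c) \<noteq> fst (snd c') \<and> snd (snd c) \<noteq> snd (snd c')"
    proof (cases "c \<in> R")
      case True
      show ?thesis
      proof (cases "c' \<in> R")
        case True
        then show ?thesis using old \<open>c \<in> R\<close> by blast
      next
        case False
        then have "c' = (i, e)" using c(2) by blast
        then show ?thesis using new[OF \<open>c \<in> R\<close>] by simp
      qed
    next
      case False
      then have ci: "c = (i, e)" using c(1) by blast
      then have "c' \<in> R" using c by blast
      then show ?thesis using new[OF \<open>c' \<in> R\<close>] ci by auto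
    qed
  qed
  qed
  moreover have "finite R'" "card R' = Suc k" using R notin unfolding R'_def by auto
  ultimately show ?case by blast
qed

theorem mainTheorem2:
  fixes n :: nat and M :: "nat \<Rightarrow> ('a \<times> 'b) set"
  assumes "n \<ge> 1"
    and "\<And>i. i \<in> {1..n} \<Longrightarrow> is_matching (M i)"
    and "\<And>i. i \<in> {1..n} \<Longrightarrow> infinite (M i) \<or> card (M i) \<ge> 2 * n"
  shows "\<exists>R. is_rainbow_matching M {1..n} R \<and> finite R \<and> card R = n"
  using greedy[of n M n, OF assms(2,3)] by blast

end
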